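(* For fixed $K$, the exact coverage probabilities are non-increasing in the serving index: $P^{k}_{\mathrm{cov,mf}}(K)\ge P^{k+1}_{\mathrm{cov,mf}}(K)$ and $P^{k}_{\mathrm{cov,zf}}(K)\ge P^{k+1}_{\mathrm{cov,zf}}(K)$ for all $1\le k\le K-1$.
   Context: Let $\Phi_b$ be a homogeneous Poisson point process on $\mathbb{R}^2$ with intensity $\lambda_b>0$; order its points by distance to the origin as $\mathbf d_1,\mathbf d_2,\dots$ with distances $r_1<r_2<\cdots$. Fix integers $K\ge2$, $\alpha>2$, $\gamma>0$, $L\ge1$ (for ZF, $L\ge K$). MF: the typical user at the origin is served by $\mathbf d_k$, desired gain $\sim\Gamma(L,1)$, every other SBS contributes an independent $\mathrm{Exp}(1)$ gain; $\mathrm{SIR}_{k,\mathrm{mf}}=g_k r_k^{-\alpha}/\sum_{j\ne k}g_j r_j^{-\alpha}$. ZF: served by $\mathbf d_k$, desired gain $\sim\Gamma(L-K+1,1)$, only SBSs $\mathbf d_j$ with $j>K$ interfere with independent $\mathrm{Exp}(1)$ gains; $\mathrm{SIR}_{k,\mathrm{zf}}=g_k r_k^{-\alpha}/\sum_{j>K}g_j r_j^{-\alpha}$. All gains independent of each other and of $\Phi_b$. $P^{k}_{\mathrm{cov,mf}}(K)=\mathbb{P}[\mathrm{SIR}_{k,\mathrm{mf}}\ge\gamma]$, $P^{k}_{\mathrm{cov,zf}}(K)=\mathbb{P}[\mathrm{SIR}_{k,\mathrm{zf}}\ge\gamma]$. *)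

theory Defs
  imports "HOL-Probability.Probability"
begin

text \<open>Points of the process are indexed from 1: d 1, d 2, ... ordered by distance
  to the origin (d 0 is an unused dummy). Gains: g 0 is the gain of the desired
  (serving) link, g j (j >= 1) is the fading gain of SBS d j towards the typical user.\<close>

definition ppp_count :: "(nat \<Rightarrow> 'w \<Rightarrow> real^2) \<Rightarrow> (real^2) set \<Rightarrow> 'w \<Rightarrow> nat" where
  "ppp_count d A w = card {j. 1 \<le> j \<and> d j w \<in> A}"

definition ordered_hppp :: "'w measure \<Rightarrow> real \<Rightarrow> (nat \<Rightarrow> 'w \<Rightarrow> real^2) \<Rightarrow> bool" where
  "ordered_hppp M lam d \<longleftrightarrow>
     (\<forall>j. d j \<in> borel_measurable M) \<and>
     (AE w in M. (\<forall>j\<ge>1. norm (d j w) < norm (d (Suc j) w)) \<and>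
                 filterlim (\<lambda>j. norm (d j w)) at_top sequentially) \<and>
     (\<forall>A. A \<in> sets borel \<and> bounded A \<longrightarrow>
          (\<forall>n. measure M {w \<in> space M. ppp_count d A w = n} =
               exp (- lam * measure lborel A) * (lam * measure lborel A) ^ n / fact n)) \<and>
     (\<forall>(As :: nat \<Rightarrow> (real^2) set) n.
          (\<forall>i<n. As i \<in> sets borel \<and> bounded (As i)) \<and> disjoint_family_on As {..<n} \<longrightarrow>
          prob_space.indep_vars M (\<lambda>_. count_space UNIV) (\<lambda>i. ppp_count d (As i)) {..<n})"

definition gains_setup :: "'w measure \<Rightarrow> (nat \<Rightarrow> 'w \<Rightarrow> real^2) \<Rightarrow> (nat \<Rightarrow> 'w \<Rightarrow> real)
     \<Rightarrow> (real \<Rightarrow> real) \<Rightarrow> bool" where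
  "gains_setup M d g D \<longleftrightarrow>
     distributed M lborel (g 0) (\<lambda>x. ennreal (D x)) \<and>
     (\<forall>j\<ge>1. distributed M lborel (g j) (\<lambda>x. ennreal (exponential_density 1 x))) \<and>
     prob_space.indep_vars M (\<lambda>_. borel) g UNIV \<and>
     (\<lambda>w j. d j w) \<in> measurable M (Pi\<^sub>M UNIV (\<lambda>_. borel)) \<and>
     (\<lambda>w j. g j w) \<in> measurable M (Pi\<^sub>M UNIV (\<lambda>_. borel)) \<and>
     prob_space.indep_set M
       (sets (vimage_algebra (space M) (\<lambda>w j. d j w) (Pi\<^sub>M UNIV (\<lambda>_. borel))))
       (sets (vimage_algebra (space M) (\<lambda>w j. g j w) (Pi\<^sub>M UNIV (\<lambda>_. borel))))"

definition sir_mf :: "real \<Rightarrow> (nat \<Rightarrow> 'w \<Rightarrow> real^2) \<Rightarrow> (nat \<Rightarrow> 'w \<Rightarrow> real) \<Rightarrow> nat \<Rightarrow> 'w \<Rightarrow> real" where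
  "sir_mf \<alpha> d g k w =
     g 0 w * norm (d k w) powr (-\<alpha>) /
     infsum (\<lambda>j. g j w * norm (d j w) powr (-\<alpha>)) ({1..} - {k})"

definition sir_zf :: "real \<Rightarrow> nat \<Rightarrow> (nat \<Rightarrow> 'w \<Rightarrow> real^2) \<Rightarrow> (nat \<Rightarrow> 'w \<Rightarrow> real) \<Rightarrow> nat \<Rightarrow> 'w \<Rightarrow> real" where
  "sir_zf \<alpha> K d g k w =
     g 0 w * norm (d k w) powr (-\<alpha>) /
     infsum (\<lambda>j. g j w * norm (d j w) powr (-\<alpha>)) {K<..}"

definition pcov_mf :: "'w measure \<Rightarrow> real \<Rightarrow> real \<Rightarrow> (nat \<Rightarrow> 'w \<Rightarrow> real^2) \<Rightarrow> (nat \<Rightarrow> 'w \<Rightarrow> real) \<Rightarrow> nat \<Rightarrow> real" where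
  "pcov_mf M \<alpha> \<gamma> d g k = measure M {w \<in> space M. sir_mf \<alpha> d g k w \<ge> \<gamma>}"

definition pcov_zf :: "'w measure \<Rightarrow> real \<Rightarrow> real \<Rightarrow> nat \<Rightarrow> (nat \<Rightarrow> 'w \<Rightarrow> real^2) \<Rightarrow> (nat \<Rightarrow> 'w \<Rightarrow> real) \<Rightarrow> nat \<Rightarrow> real" where
  "pcov_zf M \<alpha> \<gamma> K d g k = measure M {w \<in> space M. sir_zf \<alpha> K d g k w \<ge> \<gamma>}"

end

theory Submission
  imports Defs
begin


lemma infsum_nat_real_eq:
  fixes f :: "nat \<Rightarrow> real"
  shows "infsum f A = (if summable (\<lambda>n. \<bar>indicator A n * f n\<bar>) then suminf (\<lambda>n. indicator A n * f n) else 0)"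
proof -
  define g where "g n = indicator A n * f n" for n
  have 1: "infsum f A = infsum g UNIV"
    unfolding g_def by (rule infsum_cong_neutral) (auto simp: indicator_def)
  have 2: "f summable_on A \<longleftrightarrow> g summable_on UNIV"
    unfolding g_def by (rule summable_on_cong_neutral) (auto simp: indicator_def)
  show ?thesis
  proof (cases "summable (\<lambda>n. \<bar>g n\<bar>)")
    case True
    have "(g has_sum suminf g) UNIV"
      using True by (intro norm_summable_imp_has_sum) (auto intro: summable_sums summable_rabs_cancel)
    then show ?thesis using True 1 unfolding g_def by (simp add: infsumI)
  next
    case False
    have "\<not> g summable_on UNIV"
      using False summable_on_iff_abs_summable_on_real[of g UNIV]
            summable_on_UNIV_nonneg_real_iff[of "\<lambda>n. norm (g n)"] by auto
    then show ?thesis using False 1 unfolding g_def by (simp add: infsum_not_exists)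
  qed
qed

lemma borel_measurable_infsum_nat_real[measurable (raw)]:
  fixes h :: "nat \<Rightarrow> 'a \<Rightarrow> real"
  assumes [measurable]: "\<And>n. h n \<in> borel_measurable M"
  shows "(\<lambda>w. infsum (\<lambda>n. h n w) A) \<in> borel_measurable M"
proof -
  have [measurable]: "Measurable.pred M (\<lambda>w. summable (\<lambda>n. \<bar>indicator A n * h n w\<bar>))"
  proof -
    have "{w\<in>space M. summable (\<lambda>n. \<bar>indicator A n * h n w\<bar>)} =
      {w\<in>space M. Cauchy (\<lambda>i. \<Sum>n<i. \<bar>indicator A n * h n w\<bar>)}"
      by (simp add: summable_iff_convergent Cauchy_convergent_iff)
    also have "\<dots> \<in> sets M" by (rule sets_Collect_Cauchy) measurable
    finally show ?thesis unfolding pred_def by simp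
  qed
  show ?thesis unfolding infsum_nat_real_eq by measurable
qed




definition sw :: "nat \<Rightarrow> nat \<Rightarrow> nat" where
  "sw k j = (if j = k then Suc k else if j = Suc k then k else j)"

lemma pointwise_mf:
  fixes x :: "nat \<Rightarrow> real^2" and y :: "nat \<Rightarrow> real"
  assumes k: "k \<ge> 1" and a: "\<alpha> > 0" and g: "\<gamma> > 0"
    and ynn: "\<And>j. y j \<ge> 0" and ypos: "y (Suc k) > 0"
    and n1: "0 < norm (x k)" and n2: "norm (x k) < norm (x (Suc k))"
    and H: "\<gamma> \<le> y (sw k 0) * norm (x (Suc k)) powr (-\<alpha>) /
       infsum (\<lambda>j. y (sw k j) * norm (x j) powr (-\<alpha>)) ({1..} - {Suc k})"
  shows "\<gamma> \<le> y 0 * norm (x k) powr (-\<alpha>) /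
       infsum (\<lambda>j. y j * norm (x j) powr (-\<alpha>)) ({1..} - {k})"
proof -
  define a where "a j = norm (x j) powr (-\<alpha>)" for j
  define R where "R = {1..} - {k, Suc k}"
  have sw0: "sw k 0 = 0" using k by (simp add: sw_def)
  have e1: "{1..} - {k} = insert (Suc k) R" and e2: "{1..} - {Suc k} = insert k R"
    using k by (auto simp: R_def)
  have swR: "\<And>j. j \<in> R \<Longrightarrow> sw k j = j" by (auto simp: R_def sw_def)
  have swk: "sw k k = Suc k" by (simp add: sw_def)
  have nR1: "Suc k \<notin> R" and nR2: "k \<notin> R" by (auto simp: R_def)
  have ak: "a (Suc k) < a k" unfolding a_def using n1 n2 a
    by (simp add: powr_less_mono2_neg)
  have ak1: "0 < a (Suc k)" proof - have "x (Suc k) \<noteq> 0" proof assume "x (Suc k) = 0" then show False using n2 by simp qed then show ?thesis unfolding a_def by simp qed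
  let ?h = "\<lambda>j. y j * a j" and ?h' = "\<lambda>j. y (sw k j) * a j"
  have cR: "\<And>j. j \<in> R \<Longrightarrow> ?h' j = ?h j" using swR by simp
  show ?thesis
  proof (cases "?h summable_on R")
    case True
    define S where "S = infsum ?h R"
    have S0: "S \<ge> 0" unfolding S_def using ynn ak1 unfolding a_def
      by (intro infsum_nonneg) simp
    have T: "?h' summable_on R" using True by (simp only: summable_on_cong[OF cR])
    have d1: "infsum ?h ({1..} - {k}) = y (Suc k) * a (Suc k) + S"
      unfolding e1 S_def using True nR1 by (simp add: infsum_insert)
    have d2: "infsum ?h' ({1..} - {Suc k}) = y (Suc k) * a k + S"
    proof -
      have "infsum ?h' (insert k R) = ?h' k + infsum ?h' R" by (rule infsum_insert[OF T nR2])
      also have "infsum ?h' R = S" unfolding S_def by (rule infsum_cong[OF cR])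
      finally show ?thesis unfolding e2 by (simp add: swk)
    qed
    have den: "0 < y (Suc k) * a (Suc k) + S" using ypos ak1 S0 by (simp add: add_pos_nonneg)
    have den2: "y (Suc k) * a (Suc k) + S \<le> y (Suc k) * a k + S"
      using ypos ak by simp
    have num: "y 0 * a (Suc k) \<le> y 0 * a k" using ynn[of 0] ak by (simp add: mult_left_mono)
    have "\<gamma> \<le> y 0 * a (Suc k) / (y (Suc k) * a k + S)"
      using H d2 sw0 unfolding a_def by simp
    also have "\<dots> \<le> y 0 * a (Suc k) / (y (Suc k) * a (Suc k) + S)"
      proof (rule divide_left_mono[OF den2])
      show "0 \<le> y 0 * a (Suc k)" using ynn[of 0] ak1 by simp
      have "0 < y (Suc k) * a k + S" using den den2 by linarith
      then show "0 < (y (Suc k) * a k + S) * (y (Suc k) * a (Suc k) + S)" using den by simp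
    qed
    also have "\<dots> \<le> y 0 * a k / (y (Suc k) * a (Suc k) + S)"
      using den num by (intro divide_right_mono) (auto simp: less_imp_le)
    finally show ?thesis using d1 unfolding a_def by simp
  next
    case False
    have F2: "\<not> ?h' summable_on R" using False by (simp only: summable_on_cong[OF cR] not_False_eq_True)
    have "infsum ?h' ({1..} - {Suc k}) = 0"
      unfolding e2 using F2 by (simp add: summable_on_insert_iff infsum_not_exists)
    then have "\<gamma> \<le> 0" using H unfolding a_def by simp
    then show ?thesis using g by simp
  qed
qed

lemma pointwise_zf:
  fixes x :: "nat \<Rightarrow> real^2" and y :: "nat \<Rightarrow> real"
  assumes a: "\<alpha> > 0" and g: "\<gamma> > 0"
    and ynn: "y 0 \<ge> 0"
    and n1: "0 < norm (x k)" and n2: "norm (x k) < norm (x (Suc k))"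
    and H: "\<gamma> \<le> y 0 * norm (x (Suc k)) powr (-\<alpha>) / T"
  shows "\<gamma> \<le> y 0 * norm (x k) powr (-\<alpha>) / T"
proof -
  have ak: "norm (x (Suc k)) powr (-\<alpha>) < norm (x k) powr (-\<alpha>)" using n1 n2 a
    by (simp add: powr_less_mono2_neg)
  have T: "T > 0"
  proof (rule ccontr)
    assume "\<not> T > 0"
    then have "y 0 * norm (x (Suc k)) powr (-\<alpha>) / T \<le> 0" using ynn
      by (intro divide_nonneg_nonpos) auto
    then show False using H g by simp
  qed
  have "y 0 * norm (x (Suc k)) powr (-\<alpha>) \<le> y 0 * norm (x k) powr (-\<alpha>)"
    using ak ynn by (simp add: mult_left_mono)
  then show ?thesis using H T by (meson divide_right_mono less_imp_le order_trans)
qed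




lemma msw: "(\<lambda>y j. y (sw k j)) \<in> measurable (PiM UNIV (\<lambda>_. borel)) (PiM UNIV (\<lambda>_. (borel::'b::topological_space measure)))"
  by (rule measurable_PiM_single') (auto intro: measurable_component_singleton)

lemma (in prob_space) distr_pair_indep:
  assumes X: "X \<in> measurable M S" and Y: "Y \<in> measurable M T"
    and ind: "\<And>A B. A \<in> sets S \<Longrightarrow> B \<in> sets T \<Longrightarrow>
      prob (X -` A \<inter> Y -` B \<inter> space M) = prob (X -` A \<inter> space M) * prob (Y -` B \<inter> space M)"
  shows "distr M (S \<Otimes>\<^sub>M T) (\<lambda>w. (X w, Y w)) = distr M S X \<Otimes>\<^sub>M distr M T Y"
proof (rule pair_measure_eqI[symmetric])
  show "sigma_finite_measure (distr M S X)"
    using prob_space_distr[OF X] by (rule prob_space_imp_sigma_finite)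
  show "sigma_finite_measure (distr M T Y)"
    using prob_space_distr[OF Y] by (rule prob_space_imp_sigma_finite)
  show "sets (distr M S X \<Otimes>\<^sub>M distr M T Y) = sets (distr M (S \<Otimes>\<^sub>M T) (\<lambda>w. (X w, Y w)))"
    by (subst sets_distr) (rule sets_pair_measure_cong; simp)
  fix A B assume A: "A \<in> sets (distr M S X)" and B: "B \<in> sets (distr M T Y)"
  have Z: "(\<lambda>w. (X w, Y w)) \<in> measurable M (S \<Otimes>\<^sub>M T)" using X Y by measurable
  have e: "(\<lambda>w. (X w, Y w)) -` (A \<times> B) \<inter> space M = X -` A \<inter> Y -` B \<inter> space M" by auto
  show "emeasure (distr M S X) A * emeasure (distr M T Y) B = emeasure (distr M (S \<Otimes>\<^sub>M T) (\<lambda>w. (X w, Y w))) (A \<times> B)"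
    using A B X Y Z ind[of A B]
    by (simp add: emeasure_distr e emeasure_eq_measure ennreal_mult'')
qed

lemma (in prob_space) swap_distr:
  fixes d :: "nat \<Rightarrow> 'a \<Rightarrow> real^2" and g :: "nat \<Rightarrow> 'a \<Rightarrow> real"
  assumes gs: "gains_setup M d g D" and k: "k \<ge> 1"
  shows "distr M (PiM UNIV (\<lambda>_. borel) \<Otimes>\<^sub>M PiM UNIV (\<lambda>_. borel)) (\<lambda>w. ((\<lambda>j. d j w), (\<lambda>j. g j w)))
       = distr M (PiM UNIV (\<lambda>_. borel) \<Otimes>\<^sub>M PiM UNIV (\<lambda>_. borel)) (\<lambda>w. ((\<lambda>j. d j w), (\<lambda>j. g (sw k j) w)))"
proof -
  note gs' = gs[unfolded gains_setup_def]
  let ?PD = "PiM UNIV (\<lambda>_. borel) :: (nat \<Rightarrow> real^2) measure"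
  let ?PG = "PiM UNIV (\<lambda>_. borel) :: (nat \<Rightarrow> real) measure"
  have mD: "(\<lambda>w j. d j w) \<in> measurable M ?PD" using gs' by (elim conjE)
  have mG: "(\<lambda>w j. g j w) \<in> measurable M ?PG" using gs' by (elim conjE)
  have Isets: "indep_set (sets (vimage_algebra (space M) (\<lambda>w j. d j w) ?PD)) (sets (vimage_algebra (space M) (\<lambda>w j. g j w) ?PG))"
    using gs' by (elim conjE)
  have sD: "sets (vimage_algebra (space M) (\<lambda>w j. d j w) ?PD) = {(\<lambda>w j. d j w) -` A \<inter> space M | A. A \<in> sets ?PD}"
    using mD by (intro sets_vimage_algebra2) (auto dest: measurable_space)
  have sG: "sets (vimage_algebra (space M) (\<lambda>w j. g j w) ?PG) = {(\<lambda>w j. g j w) -` A \<inter> space M | A. A \<in> sets ?PG}"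
    using mG by (intro sets_vimage_algebra2) (auto dest: measurable_space)
  have J1: "distr M (?PD \<Otimes>\<^sub>M ?PG) (\<lambda>w. ((\<lambda>j. d j w), (\<lambda>j. g j w))) = distr M ?PD (\<lambda>w j. d j w) \<Otimes>\<^sub>M distr M ?PG (\<lambda>w j. g j w)"
  proof (rule distr_pair_indep[OF mD mG])
    fix A B assume "A \<in> sets ?PD" "B \<in> sets ?PG"
    then have "prob (((\<lambda>w j. d j w) -` A \<inter> space M) \<inter> ((\<lambda>w j. g j w) -` B \<inter> space M)) = prob ((\<lambda>w j. d j w) -` A \<inter> space M) * prob ((\<lambda>w j. g j w) -` B \<inter> space M)"
      by (intro indep_setD[OF Isets]) (auto simp: sD sG)
    then show "prob ((\<lambda>w j. d j w) -` A \<inter> (\<lambda>w j. g j w) -` B \<inter> space M) = prob ((\<lambda>w j. d j w) -` A \<inter> space M) * prob ((\<lambda>w j. g j w) -` B \<inter> space M)"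
      by (simp add: Int_ac)
  qed
  have mG': "(\<lambda>w j. g (sw k j) w) \<in> measurable M ?PG"
    using measurable_compose[OF mG msw[of k]] by simp
  have J2: "distr M (?PD \<Otimes>\<^sub>M ?PG) (\<lambda>w. ((\<lambda>j. d j w), (\<lambda>j. g (sw k j) w))) = distr M ?PD (\<lambda>w j. d j w) \<Otimes>\<^sub>M distr M ?PG (\<lambda>w j. g (sw k j) w)"
  proof (rule distr_pair_indep[OF mD mG'])
    fix A B assume A: "A \<in> sets ?PD" and B: "B \<in> sets ?PG"
    define B' where "B' = (\<lambda>y j. y (sw k j)) -` B \<inter> space ?PG"
    have B': "B' \<in> sets ?PG" unfolding B'_def using msw[of k] B by (rule measurable_sets)
    have eB: "(\<lambda>w j. g (sw k j) w) -` B \<inter> space M = (\<lambda>w j. g j w) -` B' \<inter> space M"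
      unfolding B'_def using mG by (auto dest: measurable_space)
    have "prob (((\<lambda>w j. d j w) -` A \<inter> space M) \<inter> ((\<lambda>w j. g j w) -` B' \<inter> space M)) = prob ((\<lambda>w j. d j w) -` A \<inter> space M) * prob ((\<lambda>w j. g j w) -` B' \<inter> space M)"
      using A B' by (intro indep_setD[OF Isets]) (auto simp: sD sG)
    moreover have "(\<lambda>w j. d j w) -` A \<inter> (\<lambda>w j. g (sw k j) w) -` B \<inter> space M = ((\<lambda>w j. d j w) -` A \<inter> space M) \<inter> ((\<lambda>w j. g j w) -` B' \<inter> space M)"
      using eB by blast
    ultimately show "prob ((\<lambda>w j. d j w) -` A \<inter> (\<lambda>w j. g (sw k j) w) -` B \<inter> space M) = prob ((\<lambda>w j. d j w) -` A \<inter> space M) * prob ((\<lambda>w j. g (sw k j) w) -` B \<inter> space M)"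
      using eB by simp
  qed
  have rv: "random_variable borel (g j)" for j
    using measurable_compose[OF mG measurable_component_singleton[of j UNIV "\<lambda>_. borel"]] by simp
  define Mj where "Mj j = distr M borel (g j)" for j
  have Mjl: "Mj j = density lborel (\<lambda>x. ennreal (exponential_density 1 x))" if "j \<ge> 1" for j
  proof -
    have "Mj j = distr M lborel (g j)" unfolding Mj_def by (rule distr_cong) auto
    also have "\<dots> = density lborel (\<lambda>x. ennreal (exponential_density 1 x))"
    proof (rule distributed_distr_eq_density)
      have "\<forall>j\<ge>1. distributed M lborel (g j) (\<lambda>x. ennreal (exponential_density 1 x))"
        using gs' by (elim conjE)
      then show "distributed M lborel (g j) (\<lambda>x. ennreal (exponential_density 1 x))" using that by blast
    qed
    finally show ?thesis .
  qed
  have Mjk: "Mj (sw k j) = Mj j" for j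
    using Mjl k by (auto simp: sw_def)
  have Mjf: "Mj = (\<lambda>j. distr M borel (g j))" by (simp add: fun_eq_iff Mj_def)
  have iv: "indep_vars (\<lambda>_. borel) g UNIV" using gs' by (elim conjE)
  have P: "distr M ?PG (\<lambda>w j. g j w) = PiM UNIV Mj"
    using indep_vars_iff_distr_eq_PiM[where I=UNIV and M'="\<lambda>_. borel" and X=g] iv rv by (simp add: Mjf restrict_UNIV)
  have psj: "prob_space (Mj j)" for j unfolding Mj_def by (rule prob_space_distr[OF rv])
  have injs: "inj_on (sw k) UNIV" by (auto simp: inj_on_def sw_def split: if_splits)
  have margG: "distr M ?PG (\<lambda>w j. g (sw k j) w) = distr M ?PG (\<lambda>w j. g j w)"
  proof -
    have "distr M ?PG (\<lambda>w j. g (sw k j) w) = distr (distr M ?PG (\<lambda>w j. g j w)) ?PG (\<lambda>y j. y (sw k j))"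
      by (subst distr_distr[OF msw mG]) (simp add: comp_def)
    also have "\<dots> = distr (PiM UNIV Mj) (PiM UNIV (\<lambda>i. Mj (sw k i))) (\<lambda>\<omega>. \<lambda>n\<in>UNIV. \<omega> (sw k n))"
      unfolding P by (rule distr_cong) (auto intro!: sets_PiM_cong simp: Mj_def restrict_UNIV)
    also have "\<dots> = PiM UNIV (\<lambda>i. Mj (sw k i))"
      by (rule distr_PiM_reindex) (auto simp: psj injs)
    also have "\<dots> = PiM UNIV Mj" using Mjk by simp
    finally show ?thesis using P by simp
  qed
  show ?thesis using J1 J2 margG by simp
qed




lemma (in prob_space) AE_pos_of_density:
  fixes X :: "'a \<Rightarrow> real"
  assumes X: "distributed M lborel X (\<lambda>x. ennreal (f x))" and f0: "\<And>x. x < 0 \<Longrightarrow> f x = 0"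
  shows "AE w in M. X w > 0"
proof -
  have mX: "X \<in> measurable M lborel" using distributed_measurable[OF X] .
  have mf: "(\<lambda>x. ennreal (f x)) \<in> borel_measurable lborel" using distributed_borel_measurable[OF X] .
  have "emeasure (distr M lborel X) {..0} = emeasure (density lborel (\<lambda>x. ennreal (f x))) {..0}"
    using distributed_distr_eq_density[OF X] by simp
  also have "\<dots> = (\<integral>\<^sup>+ x. ennreal (f x) * indicator {..0} x \<partial>lborel)"
    by (rule emeasure_density[OF mf]) (simp only: sets_lborel, intro borel_closed closed_atMost)
  also have "\<dots> = 0"
  proof -
    have "AE x in lborel. ennreal (f x) * indicator {..0} x = 0"
      using AE_lborel_singleton[of "0::real"]
    proof eventually_elim
      fix x :: real assume "x \<noteq> 0"
      then show "ennreal (f x) * indicator {..0} x = 0"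
        by (cases "x < 0") (auto simp: f0 indicator_def)
    qed
    from nn_integral_cong_AE[OF this] show ?thesis by simp
  qed
  finally have 0: "emeasure M (X -` {..0} \<inter> space M) = 0"
    using emeasure_distr[OF mX, of "{..0}"] by simp
  have N: "X -` {..0} \<inter> space M \<in> sets M"
    using measurable_sets[OF mX, of "{..0}"] by simp
  show ?thesis
    by (rule AE_iff_measurable[THEN iffD2, OF N _ 0]) auto
qed

lemma (in prob_space) gains_AE:
  assumes gs: "gains_setup M d g D" and D0: "\<And>x. x < 0 \<Longrightarrow> D x = 0"
  shows "AE w in M. \<forall>j. g j w > 0"
proof -
  note gs' = gs[unfolded gains_setup_def]
  have d0: "distributed M lborel (g 0) (\<lambda>x. ennreal (D x))" using gs' by (elim conjE)
  have dj: "\<forall>j\<ge>1. distributed M lborel (g j) (\<lambda>x. ennreal (exponential_density 1 x))"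
    using gs' by (elim conjE)
  have "AE w in M. g j w > 0" for j
  proof (cases "j = 0")
    case True
    then show ?thesis using AE_pos_of_density[OF d0 D0] by simp
  next
    case False
    then have "distributed M lborel (g j) (\<lambda>x. ennreal (exponential_density 1 x))" using dj by simp
    then show ?thesis by (rule AE_pos_of_density) (simp add: exponential_density_def)
  qed
  then show ?thesis by (simp add: AE_all_countable)
qed

lemma (in prob_space) norms_AE:
  assumes od: "ordered_hppp M lam d"
  shows "AE w in M. \<forall>j\<ge>1. 0 < norm (d j w) \<and> norm (d j w) < norm (d (Suc j) w)"
proof -
  note h = od[unfolded ordered_hppp_def]
  have o: "AE w in M. (\<forall>j\<ge>1. norm (d j w) < norm (d (Suc j) w)) \<and>
                 filterlim (\<lambda>j. norm (d j w)) at_top sequentially" using h by (elim conjE)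
  have cnt: "\<forall>A. A \<in> sets borel \<and> bounded A \<longrightarrow>
          (\<forall>n. measure M {w \<in> space M. ppp_count d A w = n} =
               exp (- lam * measure lborel A) * (lam * measure lborel A) ^ n / fact n)"
    using h by (elim conjE)
  have "measure M {w \<in> space M. ppp_count d {0} w = 0} = 1"
    using cnt[rule_format, of "{0}" 0] by simp
  then have "AE w in M. w \<in> {w \<in> space M. ppp_count d {0} w = 0}"
    by (rule AE_prob_1)
  then have c: "AE w in M. ppp_count d {0} w = 0"
    by (rule eventually_mono) auto
  show ?thesis using o c
  proof eventually_elim
    fix w assume o1: "(\<forall>j\<ge>1. norm (d j w) < norm (d (Suc j) w)) \<and>
                 filterlim (\<lambda>j. norm (d j w)) at_top sequentially"
      and c1: "ppp_count d {0} w = 0"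
    have mono: "norm (d 1 w) < norm (d j w)" if "j \<ge> 2" for j
      using that
    proof (induction j rule: dec_induct)
      case base then show ?case using o1 by (simp add: numeral_2_eq_2)
    next
      case (step j) then show ?case using o1 by (meson order.strict_trans le_trans one_le_numeral)
    qed
    have "d 1 w \<noteq> 0"
    proof
      assume z: "d 1 w = 0"
      have "j \<in> {j. 1 \<le> j \<and> d j w \<in> {0}} \<longleftrightarrow> j = 1" for j
      proof (cases "j \<ge> 2")
        case True
        then have "d j w \<noteq> 0" using mono[OF True] z by auto
        then show ?thesis using True by auto
      next
        case False
        then have "j = 0 \<or> j = 1" by auto
        then show ?thesis using z by auto
      qed
      then have "{j. 1 \<le> j \<and> d j w \<in> {0}} = {1}" by blast
      then show False using c1 by (simp add: ppp_count_def)
    qed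
    then have p1: "0 < norm (d 1 w)" by simp
    show "\<forall>j\<ge>1. 0 < norm (d j w) \<and> norm (d j w) < norm (d (Suc j) w)"
    proof (intro allI impI conjI)
      fix j :: nat assume j: "1 \<le> j"
      show "0 < norm (d j w)"
      proof (cases "j \<ge> 2")
        case True then show ?thesis using p1 mono[OF True] by linarith
      next
        case False then have "j = 1" using j by simp
        then show ?thesis using p1 by simp
      qed
      show "norm (d j w) < norm (d (Suc j) w)" using o1 j by blast
    qed
  qed
qed




definition FF :: "real \<Rightarrow> nat set \<Rightarrow> nat \<Rightarrow> (nat \<Rightarrow> real^2) \<times> (nat \<Rightarrow> real) \<Rightarrow> real" where
  "FF \<alpha> I k p = snd p 0 * norm (fst p k) powr (-\<alpha>) /
      infsum (\<lambda>j. snd p j * norm (fst p j) powr (-\<alpha>)) I"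

lemma FF_measurable[measurable]:
  "FF \<alpha> I k \<in> borel_measurable (PiM UNIV (\<lambda>_. borel) \<Otimes>\<^sub>M PiM UNIV (\<lambda>_. borel))"
  unfolding FF_def by measurable

lemma (in prob_space) pcov_via_FF:
  fixes d :: "nat \<Rightarrow> 'a \<Rightarrow> real^2" and g :: "nat \<Rightarrow> 'a \<Rightarrow> real"
  assumes mZ: "(\<lambda>w. ((\<lambda>j. d j w), (\<lambda>j. g' j w))) \<in> measurable M (PiM UNIV (\<lambda>_. borel) \<Otimes>\<^sub>M PiM UNIV (\<lambda>_. borel))"
  shows "measure M {w \<in> space M. \<gamma> \<le> FF \<alpha> I k ((\<lambda>j. d j w), (\<lambda>j. g' j w))} =
    measure (distr M (PiM UNIV (\<lambda>_. borel) \<Otimes>\<^sub>M PiM UNIV (\<lambda>_. borel)) (\<lambda>w. ((\<lambda>j. d j w), (\<lambda>j. g' j w))))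
      {p \<in> space (PiM UNIV (\<lambda>_. borel) \<Otimes>\<^sub>M PiM UNIV (\<lambda>_. borel)). \<gamma> \<le> FF \<alpha> I k p}"
proof -
  have S: "{p \<in> space (PiM UNIV (\<lambda>_. borel) \<Otimes>\<^sub>M PiM UNIV (\<lambda>_. borel)). \<gamma> \<le> FF \<alpha> I k p}
     \<in> sets (PiM UNIV (\<lambda>_. borel) \<Otimes>\<^sub>M PiM UNIV (\<lambda>_. (borel :: real measure)))"
    by measurable
  show ?thesis
    unfolding measure_distr[OF mZ S]
    using measurable_space[OF mZ] by (intro arg_cong[where f="measure M"]) auto
qed

lemma (in prob_space) mf_mono:
  fixes d :: "nat \<Rightarrow> 'a \<Rightarrow> real^2" and g :: "nat \<Rightarrow> 'a \<Rightarrow> real"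
  assumes gs: "gains_setup M d g D" and D0: "\<And>x. x < 0 \<Longrightarrow> D x = 0"
    and od: "ordered_hppp M lam d" and k: "k \<ge> 1" and a: "\<alpha> > 0" and gam: "\<gamma> > 0"
  shows "pcov_mf M \<alpha> \<gamma> d g (Suc k) \<le> pcov_mf M \<alpha> \<gamma> d g k"
proof -
  note gs' = gs[unfolded gains_setup_def]
  let ?N = "PiM UNIV (\<lambda>_. borel) \<Otimes>\<^sub>M PiM UNIV (\<lambda>_. borel) :: ((nat \<Rightarrow> real^2) \<times> (nat \<Rightarrow> real)) measure"
  have mD: "(\<lambda>w j. d j w) \<in> measurable M (PiM UNIV (\<lambda>_. borel))" using gs' by (elim conjE)
  have mG: "(\<lambda>w j. g j w) \<in> measurable M (PiM UNIV (\<lambda>_. borel))" using gs' by (elim conjE)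
  have mG': "(\<lambda>w j. g (sw k j) w) \<in> measurable M (PiM UNIV (\<lambda>_. borel))"
    using measurable_compose[OF mG msw[of k]] by simp
  have mZ: "(\<lambda>w. ((\<lambda>j. d j w), (\<lambda>j. g j w))) \<in> measurable M ?N"
    using mD mG by (rule measurable_Pair)
  have mZ': "(\<lambda>w. ((\<lambda>j. d j w), (\<lambda>j. g (sw k j) w))) \<in> measurable M ?N"
    using mD mG' by (rule measurable_Pair)
  have e: "pcov_mf M \<alpha> \<gamma> d g k' = measure M {w \<in> space M. \<gamma> \<le> FF \<alpha> ({1..} - {k'}) k' ((\<lambda>j. d j w), (\<lambda>j. g j w))}" for k'
    unfolding pcov_mf_def sir_mf_def FF_def by simp
  have "pcov_mf M \<alpha> \<gamma> d g (Suc k) = measure (distr M ?N (\<lambda>w. ((\<lambda>j. d j w), (\<lambda>j. g j w))))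
      {p \<in> space ?N. \<gamma> \<le> FF \<alpha> ({1..} - {Suc k}) (Suc k) p}"
    unfolding e by (rule pcov_via_FF[OF mZ])
  also have "\<dots> = measure (distr M ?N (\<lambda>w. ((\<lambda>j. d j w), (\<lambda>j. g (sw k j) w))))
      {p \<in> space ?N. \<gamma> \<le> FF \<alpha> ({1..} - {Suc k}) (Suc k) p}"
    using swap_distr[OF gs k] by simp
  also have "\<dots> = measure M {w \<in> space M. \<gamma> \<le> FF \<alpha> ({1..} - {Suc k}) (Suc k) ((\<lambda>j. d j w), (\<lambda>j. g (sw k j) w))}"
    by (rule pcov_via_FF[OF mZ', symmetric])
  also have "\<dots> \<le> measure M {w \<in> space M. \<gamma> \<le> FF \<alpha> ({1..} - {k}) k ((\<lambda>j. d j w), (\<lambda>j. g j w))}"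
  proof (rule finite_measure_mono_AE)
    show "{w \<in> space M. \<gamma> \<le> FF \<alpha> ({1..} - {k}) k ((\<lambda>j. d j w), (\<lambda>j. g j w))} \<in> sets M"
      using mZ by measurable
    show "AE w in M. w \<in> {w \<in> space M. \<gamma> \<le> FF \<alpha> ({1..} - {Suc k}) (Suc k) ((\<lambda>j. d j w), (\<lambda>j. g (sw k j) w))} \<longrightarrow>
       w \<in> {w \<in> space M. \<gamma> \<le> FF \<alpha> ({1..} - {k}) k ((\<lambda>j. d j w), (\<lambda>j. g j w))}"
    proof -
      have gA: "AE w in M. \<forall>j. g j w > 0" using gs D0 by (rule gains_AE)
      have nA: "AE w in M. \<forall>j\<ge>1. 0 < norm (d j w) \<and> norm (d j w) < norm (d (Suc j) w)"
        using od by (rule norms_AE)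
      show ?thesis using gA nA
    proof eventually_elim
      fix w assume gp: "\<forall>j. 0 < g j w"
        and np: "\<forall>j\<ge>1. 0 < norm (d j w) \<and> norm (d j w) < norm (d (Suc j) w)"
      show "w \<in> {w \<in> space M. \<gamma> \<le> FF \<alpha> ({1..} - {Suc k}) (Suc k) ((\<lambda>j. d j w), (\<lambda>j. g (sw k j) w))} \<longrightarrow>
       w \<in> {w \<in> space M. \<gamma> \<le> FF \<alpha> ({1..} - {k}) k ((\<lambda>j. d j w), (\<lambda>j. g j w))}"
      proof (intro impI)
        assume "w \<in> {w \<in> space M. \<gamma> \<le> FF \<alpha> ({1..} - {Suc k}) (Suc k) ((\<lambda>j. d j w), (\<lambda>j. g (sw k j) w))}"
        then have w: "w \<in> space M" and H: "\<gamma> \<le> FF \<alpha> ({1..} - {Suc k}) (Suc k) ((\<lambda>j. d j w), (\<lambda>j. g (sw k j) w))" by auto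
        have "\<gamma> \<le> (\<lambda>j. g j w) 0 * norm ((\<lambda>j. d j w) k) powr (-\<alpha>) /
           infsum (\<lambda>j. (\<lambda>j. g j w) j * norm ((\<lambda>j. d j w) j) powr (-\<alpha>)) ({1..} - {k})"
        proof (rule pointwise_mf[OF k a gam])
          show "\<And>j. 0 \<le> g j w" using gp by (simp add: less_imp_le)
          show "0 < g (Suc k) w" using gp by simp
          show "0 < norm (d k w)" using np k by simp
          show "norm (d k w) < norm (d (Suc k) w)" using np k by simp
          show "\<gamma> \<le> g (sw k 0) w * norm (d (Suc k) w) powr - \<alpha> /
             infsum (\<lambda>j. g (sw k j) w * norm (d j w) powr - \<alpha>) ({1..} - {Suc k})"
            using H by (simp add: FF_def)
        qed
        then show "w \<in> {w \<in> space M. \<gamma> \<le> FF \<alpha> ({1..} - {k}) k ((\<lambda>j. d j w), (\<lambda>j. g j w))}"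
          using w by (simp add: FF_def)
      qed
    qed
    qed
  qed
  also have "\<dots> = pcov_mf M \<alpha> \<gamma> d g k" unfolding e ..
  finally show ?thesis .
qed

lemma (in prob_space) zf_mono:
  fixes d :: "nat \<Rightarrow> 'a \<Rightarrow> real^2" and g :: "nat \<Rightarrow> 'a \<Rightarrow> real"
  assumes gs: "gains_setup M d g D" and D0: "\<And>x. x < 0 \<Longrightarrow> D x = 0"
    and od: "ordered_hppp M lam d" and k: "k \<ge> 1" and a: "\<alpha> > 0" and gam: "\<gamma> > 0"
  shows "pcov_zf M \<alpha> \<gamma> K d g (Suc k) \<le> pcov_zf M \<alpha> \<gamma> K d g k"
proof -
  note gs' = gs[unfolded gains_setup_def]
  let ?N = "PiM UNIV (\<lambda>_. borel) \<Otimes>\<^sub>M PiM UNIV (\<lambda>_. borel) :: ((nat \<Rightarrow> real^2) \<times> (nat \<Rightarrow> real)) measure"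
  have mD: "(\<lambda>w j. d j w) \<in> measurable M (PiM UNIV (\<lambda>_. borel))" using gs' by (elim conjE)
  have mG: "(\<lambda>w j. g j w) \<in> measurable M (PiM UNIV (\<lambda>_. borel))" using gs' by (elim conjE)
  have mZ: "(\<lambda>w. ((\<lambda>j. d j w), (\<lambda>j. g j w))) \<in> measurable M ?N"
    using mD mG by (rule measurable_Pair)
  have e: "pcov_zf M \<alpha> \<gamma> K d g k' = measure M {w \<in> space M. \<gamma> \<le> FF \<alpha> {K<..} k' ((\<lambda>j. d j w), (\<lambda>j. g j w))}" for k'
    unfolding pcov_zf_def sir_zf_def FF_def by simp
  have "measure M {w \<in> space M. \<gamma> \<le> FF \<alpha> {K<..} (Suc k) ((\<lambda>j. d j w), (\<lambda>j. g j w))}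
     \<le> measure M {w \<in> space M. \<gamma> \<le> FF \<alpha> {K<..} k ((\<lambda>j. d j w), (\<lambda>j. g j w))}"
  proof (rule finite_measure_mono_AE)
    show "{w \<in> space M. \<gamma> \<le> FF \<alpha> {K<..} k ((\<lambda>j. d j w), (\<lambda>j. g j w))} \<in> sets M"
      using mZ by measurable
    have gA: "AE w in M. \<forall>j. g j w > 0" using gs D0 by (rule gains_AE)
    have nA: "AE w in M. \<forall>j\<ge>1. 0 < norm (d j w) \<and> norm (d j w) < norm (d (Suc j) w)"
      using od by (rule norms_AE)
    show "AE w in M. w \<in> {w \<in> space M. \<gamma> \<le> FF \<alpha> {K<..} (Suc k) ((\<lambda>j. d j w), (\<lambda>j. g j w))} \<longrightarrow>
       w \<in> {w \<in> space M. \<gamma> \<le> FF \<alpha> {K<..} k ((\<lambda>j. d j w), (\<lambda>j. g j w))}"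
      using gA nA
    proof eventually_elim
      fix w assume gp: "\<forall>j. 0 < g j w"
        and np: "\<forall>j\<ge>1. 0 < norm (d j w) \<and> norm (d j w) < norm (d (Suc j) w)"
      show "w \<in> {w \<in> space M. \<gamma> \<le> FF \<alpha> {K<..} (Suc k) ((\<lambda>j. d j w), (\<lambda>j. g j w))} \<longrightarrow>
       w \<in> {w \<in> space M. \<gamma> \<le> FF \<alpha> {K<..} k ((\<lambda>j. d j w), (\<lambda>j. g j w))}"
      proof (intro impI)
        assume "w \<in> {w \<in> space M. \<gamma> \<le> FF \<alpha> {K<..} (Suc k) ((\<lambda>j. d j w), (\<lambda>j. g j w))}"
        then have w: "w \<in> space M" and H: "\<gamma> \<le> FF \<alpha> {K<..} (Suc k) ((\<lambda>j. d j w), (\<lambda>j. g j w))" by auto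
        have "\<gamma> \<le> (\<lambda>j. g j w) 0 * norm ((\<lambda>j. d j w) k) powr (-\<alpha>) /
           infsum (\<lambda>j. g j w * norm (d j w) powr (-\<alpha>)) {K<..}"
        proof (rule pointwise_zf[OF a gam])
          show "0 \<le> g 0 w" using gp by (simp add: less_imp_le)
          show "0 < norm (d k w)" using np k by simp
          show "norm (d k w) < norm (d (Suc k) w)" using np k by simp
          show "\<gamma> \<le> g 0 w * norm (d (Suc k) w) powr - \<alpha> /
             infsum (\<lambda>j. g j w * norm (d j w) powr - \<alpha>) {K<..}"
            using H by (simp add: FF_def)
        qed
        then show "w \<in> {w \<in> space M. \<gamma> \<le> FF \<alpha> {K<..} k ((\<lambda>j. d j w), (\<lambda>j. g j w))}"
          using w by (simp add: FF_def)
      qed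
    qed
  qed
  then show ?thesis unfolding e .
qed

theorem mainTheorem8:
  fixes M :: "'w measure" and lam \<alpha> \<gamma> :: real and K L :: nat
    and d :: "nat \<Rightarrow> 'w \<Rightarrow> real^2" and gm gz :: "nat \<Rightarrow> 'w \<Rightarrow> real"
  assumes "prob_space M"
    and "lam > 0" and "K \<ge> 2" and "\<alpha> > 2" and "\<gamma> > 0" and "L \<ge> 1"
    and "ordered_hppp M lam d"
    and "gains_setup M d gm (erlang_density (L - 1) 1)"
  shows "(\<forall>k. 1 \<le> k \<and> k \<le> K - 1 \<longrightarrow> pcov_mf M \<alpha> \<gamma> d gm k \<ge> pcov_mf M \<alpha> \<gamma> d gm (k + 1))
       \<and> (L \<ge> K \<and> gains_setup M d gz (erlang_density (L - K) 1) \<longrightarrow>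
          (\<forall>k. 1 \<le> k \<and> k \<le> K - 1 \<longrightarrow> pcov_zf M \<alpha> \<gamma> K d gz k \<ge> pcov_zf M \<alpha> \<gamma> K d gz (k + 1)))"
proof -
  interpret prob_space M by fact
  have a: "\<alpha> > 0" using assms(4) by simp
  have E0: "\<And>x. x < 0 \<Longrightarrow> erlang_density n 1 x = 0" for n by (simp add: erlang_density_def)
  show ?thesis
  proof (intro conjI allI impI)
    fix k assume "1 \<le> k \<and> k \<le> K - 1"
    then have k: "k \<ge> 1" by simp
    show "pcov_mf M \<alpha> \<gamma> d gm k \<ge> pcov_mf M \<alpha> \<gamma> d gm (k + 1)"
      using mf_mono[OF assms(8) E0 assms(7) k a assms(5)] by simp
  next
    fix k assume h: "L \<ge> K \<and> gains_setup M d gz (erlang_density (L - K) 1)" and "1 \<le> k \<and> k \<le> K - 1"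
    then have k: "k \<ge> 1" by simp
    have gz: "gains_setup M d gz (erlang_density (L - K) 1)" using h by simp
    show "pcov_zf M \<alpha> \<gamma> K d gz k \<ge> pcov_zf M \<alpha> \<gamma> K d gz (k + 1)"
      using zf_mono[OF gz E0 assms(7) k a assms(5)] by simp
  qed
qed


end
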